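(* Each of the following mixed extensions of $P_3$ is pseudo-cospectral with a graph in $\mathcal G''$ not isomorphic to it: (i) the mixed extension of type $(p,-q,p)$ is pseudo-cospectral with $K_p+CS_{p,2q}$, where $p\ge 2$, $q\ge 1$; (ii) the mixed extension of type $(p,(p-1)(p-2),p)$ is pseudo-cospectral with $K_{p(p-1)}+K_{p-1,p-1}$, where $p\ge 3$; (iii) the mixed extension of type $(p,q,p)$ is pseudo-cospectral with $K_p+CS_{p+q-1,r}$, where $p\ge 2$, $q\ge 1$ and $r=1+pq/(p+q-1)$ is an integer.
   Context: Let $P_3$ be the path with vertices $1,2,3$ and edges $\{1,2\},\{2,3\}$. For nonzero integers $t_1,t_2,t_3$, the mixed extension of $P_3$ of type $(t_1,t_2,t_3)$ is the graph whose vertex set is a disjoint union $V_1\cup V_2\cup V_3$ with $|V_i|=|t_i|$, where $V_i$ is a clique if $t_i>0$ and a coclique if $t_i<0$, every vertex of $V_2$ is adjacent to every vertex of $V_1\cup V_3$, and there are no edges between $V_1$ and $V_3$. $K_n$ denotes the complete graph, $K_{a,b}$ the complete bipartite graph, and $CS_{a,b}$ (complete split graph) denotes the complete graph $K_{a+b}$ from which the edges of a complete subgraph $K_b$ are deleted (so it has a clique of order $a$ and a coclique of order $b$, all joined). $G_1+G_2$ denotes the disjoint union. All spectra are adjacency spectra. $\mathcal G''$ is the class of graphs with no isolated vertices such that all but at most three adjacency eigenvalues are equal to $0$ or $-1$, and which have exactly two positive eigenvalues and exactly one eigenvalue less than $-1$. Every graph in $\mathcal G''$ on $n$ vertices has characteristic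 polynomial of the form $(x^3-bx^2-cx+d)(x+1)^b x^{n-b-3}$ with $b\ge 0$, $d>0$; two graphs in $\mathcal G''$ are called pseudo-cospectral if they have the same coefficients $b,c,d$, i.e. the same multiset of nonzero adjacency eigenvalues (possibly with different numbers of vertices). *)

theory Defs
  imports "Jordan_Normal_Form.Char_Poly"
begin

text \<open>A finite simple graph on the vertex set {0..<n} is a pair (n, E) with E a
  symmetric irreflexive adjacency relation (only its values on {0..<n} matter).\<close>

type_synonym graph = "nat \<times> (nat \<Rightarrow> nat \<Rightarrow> bool)"

definition simple_graph :: "graph \<Rightarrow> bool" where
  "simple_graph G \<longleftrightarrow> (\<forall>i<fst G. \<forall>j<fst G. (snd G i j \<longleftrightarrow> snd G j i) \<and> \<not> snd G i i)"

definition adj_mat :: "graph \<Rightarrow> real mat" where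
  "adj_mat G = mat (fst G) (fst G) (\<lambda>(i,j). if snd G i j then 1 else 0)"

text \<open>Adjacency spectrum: multiset of eigenvalues (roots of the characteristic
  polynomial, with multiplicity); all real since the adjacency matrix is symmetric.\<close>
definition spec :: "graph \<Rightarrow> real multiset" where
  "spec G = proots (char_poly (adj_mat G))"

definition no_isolated :: "graph \<Rightarrow> bool" where
  "no_isolated G \<longleftrightarrow> (\<forall>i<fst G. \<exists>j<fst G. snd G i j)"

definition isomorphic :: "graph \<Rightarrow> graph \<Rightarrow> bool" where
  "isomorphic G H \<longleftrightarrow> (\<exists>f. bij_betw f {0..<fst G} {0..<fst H} \<and>
      (\<forall>i<fst G. \<forall>j<fst G. snd G i j \<longleftrightarrow> snd H (f i) (f j)))"

definition classG2 :: "graph \<Rightarrow> bool" where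
  "classG2 G \<longleftrightarrow> simple_graph G \<and> no_isolated G \<and>
     size (filter_mset (\<lambda>x. x \<noteq> 0 \<and> x \<noteq> -1) (spec G)) \<le> 3 \<and>
     size (filter_mset (\<lambda>x. x > 0) (spec G)) = 2 \<and>
     size (filter_mset (\<lambda>x. x < -1) (spec G)) = 1"

definition pseudo_cospectral :: "graph \<Rightarrow> graph \<Rightarrow> bool" where
  "pseudo_cospectral G H \<longleftrightarrow> classG2 G \<and> classG2 H \<and>
     filter_mset (\<lambda>x. x \<noteq> 0) (spec G) = filter_mset (\<lambda>x. x \<noteq> 0) (spec H)"

definition complete :: "nat \<Rightarrow> graph" ("K") where
  "complete n = (n, \<lambda>i j. i \<noteq> j)"

definition complete_bip :: "nat \<Rightarrow> nat \<Rightarrow> graph" where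
  "complete_bip a b = (a + b, \<lambda>i j. (i < a) \<noteq> (j < a))"

text \<open>CS a b: K_(a+b) minus the edges of a K_b (vertices a..a+b-1 form the coclique).\<close>
definition complete_split :: "nat \<Rightarrow> nat \<Rightarrow> graph" where
  "complete_split a b = (a + b, \<lambda>i j. i \<noteq> j \<and> (i < a \<or> j < a))"

definition disj_union :: "graph \<Rightarrow> graph \<Rightarrow> graph" where
  "disj_union G H = (fst G + fst H, \<lambda>i j.
      (i < fst G \<and> j < fst G \<and> snd G i j) \<or>
      (fst G \<le> i \<and> fst G \<le> j \<and> snd H (i - fst G) (j - fst G)))"

text \<open>Mixed extension of P_3 of type (t1,t2,t3): blocks V1 = [0,n1), V2 = [n1,n1+n2),
  V3 = [n1+n2, n1+n2+n3) with n_k = |t_k|; V_k a clique iff t_k > 0 (coclique otherwise);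
  V2 joined to V1 and V3; no edges between V1 and V3.\<close>
definition mixed_ext_P3 :: "int \<Rightarrow> int \<Rightarrow> int \<Rightarrow> graph" where
  "mixed_ext_P3 t1 t2 t3 =
    (let n1 = nat \<bar>t1\<bar>; n2 = nat \<bar>t2\<bar>; n3 = nat \<bar>t3\<bar>;
         blk = (\<lambda>i::nat. if i < n1 then 1 else if i < n1 + n2 then 2 else (3::nat));
         t = (\<lambda>k::nat. if k = 1 then t1 else if k = 2 then t2 else t3)
     in (n1 + n2 + n3, \<lambda>i j. i \<noteq> j \<and>
          ((blk i = blk j \<and> t (blk i) > 0) \<or>
           (blk i = 2 \<and> blk j \<noteq> 2) \<or> (blk i \<noteq> 2 \<and> blk j = 2))))"

end

theory Submission
  imports Defs
begin



definition fam :: "nat \<Rightarrow> (nat \<Rightarrow> nat) \<Rightarrow> (nat \<Rightarrow> 'a::comm_ring_1) \<Rightarrow> (nat \<Rightarrow> 'a) \<Rightarrow> (nat \<Rightarrow> nat \<Rightarrow> 'a) \<Rightarrow> 'a mat" where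
  "fam n \<beta> \<omega> d g = mat n n (\<lambda>(i,j). (if i = j then d (\<beta> i) else 0) + g (\<beta> i) (\<beta> j) * \<omega> j)"

lemma fam_carrier[simp]: "fam n \<beta> \<omega> d g \<in> carrier_mat n n"
  unfolding fam_def by auto

lemma fam_dim[simp]: "dim_row (fam n \<beta> \<omega> d g) = n" "dim_col (fam n \<beta> \<omega> d g) = n"
  unfolding fam_def by auto

lemma twin:
  assumes u: "u < n" and v: "v < n" and uv: "u \<noteq> v" and b: "\<beta> u = \<beta> v"
  shows "det (fam n \<beta> \<omega> d g) = d (\<beta> u) *
     det (fam (n - 1) (\<lambda>i. \<beta> (if i < u then i else Suc i))
                      (\<lambda>i. (\<omega>(v := \<omega> u + \<omega> v)) (if i < u then i else Suc i)) d g)"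
proof -
  let ?A = "fam n \<beta> \<omega> d g"
  let ?B = "addrow (-1) u v ?A"
  let ?C = "addcol 1 v u ?B"
  have A: "?A \<in> carrier_mat n n" by simp
  have B: "?B \<in> carrier_mat n n" by (simp add: mat_addrow_def)
  have C: "?C \<in> carrier_mat n n" using B by (simp add: mat_addcol_def)
  have "det ?A = det ?B" using det_addrow[OF v uv A] by simp
  also have "\<dots> = det ?C" using det_addcol[OF u uv[symmetric] B] by simp
  also have "\<dots> = (\<Sum>j<n. ?C $$ (u,j) * cofactor ?C u j)"
    by (rule laplace_expansion_row[OF C u])
  also have "\<dots> = (\<Sum>j<n. (if j = u then d (\<beta> u) * cofactor ?C u j else 0))"
  proof (rule sum.cong[OF refl])
    fix j assume "j \<in> {..<n}"
    hence j: "j < n" by simp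
    have "?C $$ (u,j) = (if j = u then d (\<beta> u) else 0)"
      using j u v uv b B unfolding fam_def
      by (auto simp: mat_addrow_def mat_addcol_def)
    thus "?C $$ (u,j) * cofactor ?C u j = (if j = u then d (\<beta> u) * cofactor ?C u j else 0)" by simp
  qed
  also have "\<dots> = d (\<beta> u) * cofactor ?C u u" using u by simp
  also have "cofactor ?C u u = det (mat_delete ?C u u)" unfolding cofactor_def by simp
  also have "mat_delete ?C u u = fam (n - 1) (\<lambda>i. \<beta> (if i < u then i else Suc i))
                      (\<lambda>i. (\<omega>(v := \<omega> u + \<omega> v)) (if i < u then i else Suc i)) d g"
    unfolding fam_def
    apply (rule eq_matI)
    using u v uv b B C
    by (auto simp: mat_delete_def mat_addrow_def mat_addcol_def algebra_simps)
  finally show ?thesis .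
qed




lemma det2: assumes A: "(A :: 'a :: comm_ring_1 mat) \<in> carrier_mat 2 2"
  shows "det A = A $$ (0,0) * A $$ (1,1) - A $$ (0,1) * A $$ (1,0)"
proof -
  have "det A = (\<Sum>j<2. A $$ (0,j) * cofactor A 0 j)"
    by (rule laplace_expansion_row[OF A], simp)
  also have "\<dots> = A $$ (0,0) * cofactor A 0 0 + A $$ (0,1) * cofactor A 0 1"
    by (simp add: eval_nat_numeral lessThan_Suc)
  also have "cofactor A 0 0 = A $$ (1,1)" unfolding cofactor_def
    using A by (subst det_single, auto simp: mat_delete_def numeral_2_eq_2)
  also have "cofactor A 0 1 = - A $$ (1,0)" unfolding cofactor_def
    using A by (subst det_single, auto simp: mat_delete_def numeral_2_eq_2)
  finally show ?thesis by simp
qed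

lemma det3: assumes A: "(A :: 'a :: comm_ring_1 mat) \<in> carrier_mat 3 3"
  shows "det A = A $$ (0,0) * (A $$ (1,1) * A $$ (2,2) - A $$ (1,2) * A $$ (2,1))
    - A $$ (0,1) * (A $$ (1,0) * A $$ (2,2) - A $$ (1,2) * A $$ (2,0))
    + A $$ (0,2) * (A $$ (1,0) * A $$ (2,1) - A $$ (1,1) * A $$ (2,0))"
proof -
  have "det A = (\<Sum>j<3. A $$ (0,j) * cofactor A 0 j)"
    by (rule laplace_expansion_row[OF A], simp)
  also have "\<dots> = A $$ (0,0) * cofactor A 0 0 + A $$ (0,1) * cofactor A 0 1 + A $$ (0,2) * cofactor A 0 2"
    by (simp add: eval_nat_numeral lessThan_Suc)
  also have "cofactor A 0 0 = A $$ (1,1) * A $$ (2,2) - A $$ (1,2) * A $$ (2,1)" unfolding cofactor_def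
    using A by (subst det2, auto simp: mat_delete_def numeral_2_eq_2)
  also have "cofactor A 0 1 = - (A $$ (1,0) * A $$ (2,2) - A $$ (1,2) * A $$ (2,0))" unfolding cofactor_def
    using A by (subst det2, auto simp: mat_delete_def numeral_2_eq_2)
  also have "cofactor A 0 2 = A $$ (1,0) * A $$ (2,1) - A $$ (1,1) * A $$ (2,0)" unfolding cofactor_def
    using A by (subst det2, auto simp: mat_delete_def numeral_2_eq_2)
  finally show ?thesis by (simp add: algebra_simps)
qed



definition blk :: "nat \<Rightarrow> nat \<Rightarrow> nat \<Rightarrow> nat" where
  "blk n1 n2 i = (if i < n1 then 0 else if i < n1 + n2 then 1 else 2)"

definition wt :: "nat \<Rightarrow> nat \<Rightarrow> 'a \<Rightarrow> 'a \<Rightarrow> 'a \<Rightarrow> nat \<Rightarrow> 'a::comm_ring_1" where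
  "wt n1 n2 w0 w1 w2 i = (if i = 0 then w0 else if i = n1 then w1 else if i = n1 + n2 then w2 else 1)"

lemma fam_cong: "(\<And>i. i < n \<Longrightarrow> \<beta> i = \<beta>' i) \<Longrightarrow> (\<And>i. i < n \<Longrightarrow> \<omega> i = \<omega>' i) \<Longrightarrow>
   fam n \<beta> \<omega> d g = fam n \<beta>' \<omega>' d g"
  unfolding fam_def by (rule eq_matI) auto

lemma fam_cong': "n = n' \<Longrightarrow> (\<And>i. i < n \<Longrightarrow> \<beta> i = \<beta>' i) \<Longrightarrow> (\<And>i. i < n \<Longrightarrow> \<omega> i = \<omega>' i) \<Longrightarrow>
   fam n \<beta> \<omega> d g = fam n' \<beta>' \<omega>' d g"
  unfolding fam_def by (rule eq_matI) auto

lemma red0: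
  assumes "n1 \<ge> 2" "n2 \<ge> 1"
  shows "det (fam (n1+n2+n3) (blk n1 n2) (wt n1 n2 w0 w1 w2) d g) =
    d 0 * det (fam (n1 - 1 + n2 + n3) (blk (n1 - 1) n2) (wt (n1 - 1) n2 (w0 + 1) w1 w2) d g)"
proof -
  have "det (fam (n1+n2+n3) (blk n1 n2) (wt n1 n2 w0 w1 w2) d g) =
    d (blk n1 n2 0) * det (fam (n1+n2+n3 - 1) (\<lambda>i. blk n1 n2 (if i < 0 then i else Suc i))
         (\<lambda>i. ((wt n1 n2 w0 w1 w2)(1 := wt n1 n2 w0 w1 w2 0 + wt n1 n2 w0 w1 w2 1)) (if i < 0 then i else Suc i)) d g)"
    by (rule twin) (use assms in \<open>auto simp: blk_def\<close>)
  also have "fam (n1+n2+n3 - 1) (\<lambda>i. blk n1 n2 (if i < 0 then i else Suc i))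
         (\<lambda>i. ((wt n1 n2 w0 w1 w2)(1 := wt n1 n2 w0 w1 w2 0 + wt n1 n2 w0 w1 w2 1)) (if i < 0 then i else Suc i)) d g
     = fam (n1 - 1 + n2 + n3) (blk (n1 - 1) n2) (wt (n1 - 1) n2 (w0 + 1) w1 w2) d g"
    using assms by (intro fam_cong') (auto simp: blk_def wt_def)
  also have "blk n1 n2 0 = 0" using assms by (simp add: blk_def)
  finally show ?thesis .
qed

lemma red1:
  assumes "n1 \<ge> 1" "n2 \<ge> 2"
  shows "det (fam (n1+n2+n3) (blk n1 n2) (wt n1 n2 w0 w1 w2) d g) =
    d 1 * det (fam (n1 + (n2 - 1) + n3) (blk n1 (n2 - 1)) (wt n1 (n2 - 1) w0 (w1 + 1) w2) d g)"
proof -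
  have "det (fam (n1+n2+n3) (blk n1 n2) (wt n1 n2 w0 w1 w2) d g) =
    d (blk n1 n2 n1) * det (fam (n1+n2+n3 - 1) (\<lambda>i. blk n1 n2 (if i < n1 then i else Suc i))
         (\<lambda>i. ((wt n1 n2 w0 w1 w2)(Suc n1 := wt n1 n2 w0 w1 w2 n1 + wt n1 n2 w0 w1 w2 (Suc n1))) (if i < n1 then i else Suc i)) d g)"
    by (rule twin) (use assms in \<open>auto simp: blk_def\<close>)
  also have "fam (n1+n2+n3 - 1) (\<lambda>i. blk n1 n2 (if i < n1 then i else Suc i))
         (\<lambda>i. ((wt n1 n2 w0 w1 w2)(Suc n1 := wt n1 n2 w0 w1 w2 n1 + wt n1 n2 w0 w1 w2 (Suc n1))) (if i < n1 then i else Suc i)) d g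
     = fam (n1 + (n2 - 1) + n3) (blk n1 (n2 - 1)) (wt n1 (n2 - 1) w0 (w1 + 1) w2) d g"
    using assms by (intro fam_cong') (auto simp: blk_def wt_def)
  also have "blk n1 n2 n1 = 1" using assms by (simp add: blk_def)
  finally show ?thesis .
qed

lemma red2:
  assumes "n1 \<ge> 1" "n2 \<ge> 1" "n3 \<ge> 2"
  shows "det (fam (n1+n2+n3) (blk n1 n2) (wt n1 n2 w0 w1 w2) d g) =
    d 2 * det (fam (n1 + n2 + (n3 - 1)) (blk n1 n2) (wt n1 n2 w0 w1 (w2 + 1)) d g)"
proof -
  have "det (fam (n1+n2+n3) (blk n1 n2) (wt n1 n2 w0 w1 w2) d g) =
    d (blk n1 n2 (n1+n2)) * det (fam (n1+n2+n3 - 1) (\<lambda>i. blk n1 n2 (if i < n1+n2 then i else Suc i))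
         (\<lambda>i. ((wt n1 n2 w0 w1 w2)(Suc (n1+n2) := wt n1 n2 w0 w1 w2 (n1+n2) + wt n1 n2 w0 w1 w2 (Suc (n1+n2)))) (if i < n1+n2 then i else Suc i)) d g)"
    by (rule twin) (use assms in \<open>auto simp: blk_def\<close>)
  also have "fam (n1+n2+n3 - 1) (\<lambda>i. blk n1 n2 (if i < n1+n2 then i else Suc i))
         (\<lambda>i. ((wt n1 n2 w0 w1 w2)(Suc (n1+n2) := wt n1 n2 w0 w1 w2 (n1+n2) + wt n1 n2 w0 w1 w2 (Suc (n1+n2)))) (if i < n1+n2 then i else Suc i)) d g
     = fam (n1 + n2 + (n3 - 1)) (blk n1 n2) (wt n1 n2 w0 w1 (w2 + 1)) d g"
    using assms by (intro fam_cong') (auto simp: blk_def wt_def)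
  also have "blk n1 n2 (n1+n2) = 2" using assms by (simp add: blk_def)
  finally show ?thesis .
qed

lemma iter2: assumes "n1 \<ge> 1" "n2 \<ge> 1" "n3 \<ge> 1"
  shows "det (fam (n1+n2+n3) (blk n1 n2) (wt n1 n2 w0 w1 w2) d g) =
    d 2 ^ (n3 - 1) * det (fam (n1 + n2 + 1) (blk n1 n2) (wt n1 n2 w0 w1 (w2 + of_nat n3 - 1)) d g)"
  using assms(3)
proof (induction n3 arbitrary: w2 rule: nat_induct_at_least)
  case base
  then show ?case by simp
next
  case (Suc m)
  have "det (fam (n1+n2+Suc m) (blk n1 n2) (wt n1 n2 w0 w1 w2) d g) =
    d 2 * det (fam (n1 + n2 + m) (blk n1 n2) (wt n1 n2 w0 w1 (w2 + 1)) d g)"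
    using red2[of n1 n2 "Suc m"] assms Suc.hyps by simp
  also have "\<dots> = d 2 * (d 2 ^ (m - 1) * det (fam (n1 + n2 + 1) (blk n1 n2) (wt n1 n2 w0 w1 (w2 + 1 + of_nat m - 1)) d g))"
    using Suc.IH[of "w2 + 1"] by simp
  also have "w2 + 1 + of_nat m - 1 = w2 + of_nat (Suc m) - 1" by simp
  also have "d 2 * (d 2 ^ (m - 1) * x) = d 2 ^ (Suc m - 1) * x" for x
    using Suc by (cases m) auto
  finally show ?case .
qed

lemma iter1: assumes "n1 \<ge> 1" "n2 \<ge> 1"
  shows "det (fam (n1+n2+1) (blk n1 n2) (wt n1 n2 w0 w1 w2) d g) =
    d 1 ^ (n2 - 1) * det (fam (n1 + 1 + 1) (blk n1 1) (wt n1 1 w0 (w1 + of_nat n2 - 1) w2) d g)"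
  using assms(2)
proof (induction n2 arbitrary: w1 rule: nat_induct_at_least)
  case base
  then show ?case by simp
next
  case (Suc m)
  have "det (fam (n1+Suc m+1) (blk n1 (Suc m)) (wt n1 (Suc m) w0 w1 w2) d g) =
    d 1 * det (fam (n1 + m + 1) (blk n1 m) (wt n1 m w0 (w1 + 1) w2) d g)"
    using red1[of n1 "Suc m" 1] assms Suc.hyps by simp
  also have "\<dots> = d 1 * (d 1 ^ (m - 1) * det (fam (n1 + 1 + 1) (blk n1 1) (wt n1 1 w0 (w1 + 1 + of_nat m - 1) w2) d g))"
    using Suc.IH[of "w1 + 1"] by simp
  also have "w1 + 1 + of_nat m - 1 = w1 + of_nat (Suc m) - 1" by simp
  also have "d 1 * (d 1 ^ (m - 1) * x) = d 1 ^ (Suc m - 1) * x" for x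
    using Suc by (cases m) auto
  finally show ?case .
qed

lemma iter0: assumes "n1 \<ge> 1"
  shows "det (fam (n1+1+1) (blk n1 1) (wt n1 1 w0 w1 w2) d g) =
    d 0 ^ (n1 - 1) * det (fam (1 + 1 + 1) (blk 1 1) (wt 1 1 (w0 + of_nat n1 - 1) w1 w2) d g)"
  using assms
proof (induction n1 arbitrary: w0 rule: nat_induct_at_least)
  case base
  then show ?case by simp
next
  case (Suc m)
  have "det (fam (Suc m+1+1) (blk (Suc m) 1) (wt (Suc m) 1 w0 w1 w2) d g) =
    d 0 * det (fam (m + 1 + 1) (blk m 1) (wt m 1 (w0 + 1) w1 w2) d g)"
    using red0[of "Suc m" 1 1] assms Suc.hyps by simp
  also have "\<dots> = d 0 * (d 0 ^ (m - 1) * det (fam (1 + 1 + 1) (blk 1 1) (wt 1 1 (w0 + 1 + of_nat m - 1) w1 w2) d g))"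
    using Suc.IH[of "w0 + 1"] by simp
  also have "w0 + 1 + of_nat m - 1 = w0 + of_nat (Suc m) - 1" by simp
  also have "d 0 * (d 0 ^ (m - 1) * x) = d 0 ^ (Suc m - 1) * x" for x
    using Suc by (cases m) auto
  finally show ?case .
qed

lemma three_eq: "(1+1+1::nat) = 3" by simp

lemma det_blocks: assumes "n1 \<ge> 1" "n2 \<ge> 1" "n3 \<ge> 1"
  shows "det (fam (n1+n2+n3) (blk n1 n2) (\<lambda>_. 1) d g) =
    d 0 ^ (n1 - 1) * d 1 ^ (n2 - 1) * d 2 ^ (n3 - 1) *
    (let W0 = of_nat n1; W1 = of_nat n2; W2 = of_nat n3;
         a = (\<lambda>k l. (if k = l then d k else 0) + g k l * (if l = 0 then W0 else if l = 1 then W1 else W2))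
     in a 0 0 * (a 1 1 * a 2 2 - a 1 2 * a 2 1) - a 0 1 * (a 1 0 * a 2 2 - a 1 2 * a 2 0)
        + a 0 2 * (a 1 0 * a 2 1 - a 1 1 * a 2 0))"
proof -
  have "fam (n1+n2+n3) (blk n1 n2) (\<lambda>_. 1) d g = fam (n1+n2+n3) (blk n1 n2) (wt n1 n2 1 1 1) d g"
    by (intro fam_cong) (auto simp: wt_def)
  also have "det \<dots> = d 2 ^ (n3 - 1) * det (fam (n1 + n2 + 1) (blk n1 n2) (wt n1 n2 1 1 (1 + of_nat n3 - 1)) d g)"
    by (rule iter2[OF assms])
  also have "det (fam (n1 + n2 + 1) (blk n1 n2) (wt n1 n2 1 1 (1 + of_nat n3 - 1)) d g)
     = d 1 ^ (n2 - 1) * det (fam (n1 + 1 + 1) (blk n1 1) (wt n1 1 1 (1 + of_nat n2 - 1) (1 + of_nat n3 - 1)) d g)"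
    by (rule iter1[OF assms(1,2)])
  also have "det (fam (n1 + 1 + 1) (blk n1 1) (wt n1 1 1 (1 + of_nat n2 - 1) (1 + of_nat n3 - 1)) d g)
     = d 0 ^ (n1 - 1) * det (fam (1 + 1 + 1) (blk 1 1) (wt 1 1 (1 + of_nat n1 - 1) (1 + of_nat n2 - 1) (1 + of_nat n3 - 1)) d g)"
    by (rule iter0[OF assms(1)])
  also have "det (fam (1 + 1 + 1) (blk 1 1) (wt 1 1 (1 + of_nat n1 - 1) (1 + of_nat n2 - 1) (1 + of_nat n3 - 1)) d g)
     = (let W0 = of_nat n1; W1 = of_nat n2; W2 = of_nat n3;
         a = (\<lambda>k l. (if k = l then d k else 0) + g k l * (if l = 0 then W0 else if l = 1 then W1 else W2))
       in a 0 0 * (a 1 1 * a 2 2 - a 1 2 * a 2 1) - a 0 1 * (a 1 0 * a 2 2 - a 1 2 * a 2 0)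
        + a 0 2 * (a 1 0 * a 2 1 - a 1 1 * a 2 0))"
    unfolding three_eq det3[OF fam_carrier]
    by (simp add: fam_def blk_def wt_def Let_def)
  finally show ?thesis by (simp only: mult_ac)
qed



definition dd :: "(nat \<Rightarrow> nat \<Rightarrow> bool) \<Rightarrow> nat \<Rightarrow> real poly" where
  "dd R k = (if R k k then [:1,1:] else [:0,1:])"
definition gg :: "(nat \<Rightarrow> nat \<Rightarrow> bool) \<Rightarrow> nat \<Rightarrow> nat \<Rightarrow> real poly" where
  "gg R k l = (if R k l then -1 else 0)"

lemma char_blocks:
  assumes n: "fst G = n1 + n2 + n3" and pos: "n1 \<ge> 1" "n2 \<ge> 1" "n3 \<ge> 1"
    and adj: "\<And>i j. i < fst G \<Longrightarrow> j < fst G \<Longrightarrow> snd G i j = (i \<noteq> j \<and> R (blk n1 n2 i) (blk n1 n2 j))"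
  shows "char_poly (adj_mat G) = dd R 0 ^ (n1 - 1) * dd R 1 ^ (n2 - 1) * dd R 2 ^ (n3 - 1) *
    (let W0 = of_nat n1; W1 = of_nat n2; W2 = of_nat n3;
         a = (\<lambda>k l. (if k = l then dd R k else 0) + gg R k l * (if l = 0 then W0 else if l = 1 then W1 else W2))
     in a 0 0 * (a 1 1 * a 2 2 - a 1 2 * a 2 1) - a 0 1 * (a 1 0 * a 2 2 - a 1 2 * a 2 0)
        + a 0 2 * (a 1 0 * a 2 1 - a 1 1 * a 2 0))"
proof -
  have e: "char_poly_matrix (adj_mat G) = fam (n1+n2+n3) (blk n1 n2) (\<lambda>_. 1) (dd R) (gg R)"
    unfolding char_poly_matrix_def fam_def Defs.adj_mat_def n
    by (rule eq_matI) (use adj n in \<open>auto simp: dd_def gg_def\<close>)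
  show ?thesis unfolding char_poly_def e by (rule det_blocks[OF pos])
qed




lemma quad_roots:
  fixes b c :: real
  assumes "c > 0" "c > b + 1"
  shows "\<exists>r1 r2. [:-c,-b,1:] = [:-r1,1:] * [:-r2,1:] \<and> r1 > 0 \<and> r2 < -1"
proof -
  define s where "s = sqrt (b^2 + 4*c)"
  have s0: "s \<ge> 0" unfolding s_def using assms by simp
  have ss: "s^2 = b^2 + 4*c" unfolding s_def using assms
    by (simp add: add_nonneg_pos)
  have "(b+2)^2 < s^2" using ss assms by (simp add: power2_eq_square algebra_simps)
  hence 1: "s > b + 2" using s0 by (rule power_less_imp_less_base)
  have "(-b)^2 < s^2" using ss assms by simp
  hence 2: "s > -b" using s0 by (rule power_less_imp_less_base)
  have "(b+s)*(b-s) = -4*c" using ss by (simp add: power2_eq_square algebra_simps)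
  hence 3: "[:-c,-b,1:] = [:-((b+s)/2),1:] * [:-((b-s)/2),1:]"
    by (simp add: field_simps)
  show ?thesis
    by (intro exI[of _ "(b+s)/2"] exI[of _ "(b-s)/2"]) (use 1 2 3 in auto)
qed



lemma filter_replicate_mset[simp]:
  "filter_mset P (replicate_mset n x) = (if P x then replicate_mset n x else {#})"
  by (induction n) auto

lemma spec_form:
  assumes sg: "simple_graph G" and ni: "no_isolated G"
    and ch: "char_poly (adj_mat G) = [:1,1:]^a * [:0,1:]^e * ([:-l,1:] * ([:-r1,1:] * [:-r2,1:]))"
    and l: "l > 0" and r1: "r1 > 0" and r2: "r2 < -1"
  shows "classG2 G \<and> filter_mset (\<lambda>x. x \<noteq> 0) (spec G) = replicate_mset a (-1) + {#l, r1, r2#}"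
proof -
  have sp: "spec G = replicate_mset a (-1) + replicate_mset e 0 + {#l, r1, r2#}"
  proof -
    have nz: "\<And>x::real. [:x,1:] \<noteq> 0" by simp
    have nzp: "\<And>x::real. \<And>n. [:x,1:] ^ n \<noteq> 0" by simp
    have A: "proots ([:1,1:]^a * [:0,1:]^e * ([:-l,1:] * ([:-r1,1:] * [:-r2,1:]))) =
      proots ([:1,1:]^a) + proots ([:0,1:]^e) + (proots [:-l,1:] + (proots [:-r1,1:] + proots [:-r2,1:]))"
      by (simp only: proots_mult nz nzp mult_eq_0_iff de_Morgan_disj not_False_eq_True conj_absorb)
    show ?thesis unfolding spec_def ch A by (simp add: proots_power)
  qed
  show ?thesis
    unfolding classG2_def sp using sg ni l r1 r2 by auto
qed




definition Rmix :: "int \<Rightarrow> int \<Rightarrow> int \<Rightarrow> nat \<Rightarrow> nat \<Rightarrow> bool" where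
  "Rmix t1 t2 t3 k l = ((k = l \<and> (if k = 0 then t1 else if k = 1 then t2 else t3) > 0) \<or> ((k = 1) \<noteq> (l = 1)))"

lemma mixed_fst: "fst (mixed_ext_P3 t1 t2 t3) = nat \<bar>t1\<bar> + nat \<bar>t2\<bar> + nat \<bar>t3\<bar>"
  unfolding mixed_ext_P3_def Let_def by simp

lemma mixed_adj:
  "snd (mixed_ext_P3 t1 t2 t3) i j =
    (i \<noteq> j \<and> Rmix t1 t2 t3 (blk (nat \<bar>t1\<bar>) (nat \<bar>t2\<bar>) i) (blk (nat \<bar>t1\<bar>) (nat \<bar>t2\<bar>) j))"
  unfolding mixed_ext_P3_def Let_def Rmix_def blk_def by auto

definition Rks :: "nat \<Rightarrow> nat \<Rightarrow> bool" where
  "Rks k l = ((k = 0 \<and> l = 0) \<or> (k \<noteq> 0 \<and> l \<noteq> 0 \<and> (k = 1 \<or> l = 1)))"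
definition Rkb :: "nat \<Rightarrow> nat \<Rightarrow> bool" where
  "Rkb k l = ((k = 0 \<and> l = 0) \<or> (k \<noteq> 0 \<and> l \<noteq> 0 \<and> k \<noteq> l))"

lemma ks_fst: "fst (disj_union (K a) (complete_split b c)) = a + b + c"
  unfolding disj_union_def complete_def complete_split_def by simp
lemma ks_adj: "snd (disj_union (K a) (complete_split b c)) i j = (i \<noteq> j \<and> Rks (blk a b i) (blk a b j))"
  unfolding disj_union_def complete_def complete_split_def Rks_def blk_def by auto
lemma kb_fst: "fst (disj_union (K a) (complete_bip b c)) = a + b + c"
  unfolding disj_union_def complete_def complete_bip_def by simp
lemma kb_adj: "snd (disj_union (K a) (complete_bip b c)) i j = (i \<noteq> j \<and> Rkb (blk a b i) (blk a b j))"
  unfolding disj_union_def complete_def complete_bip_def Rkb_def blk_def by auto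

lemma char_M1:
  assumes "p \<ge> 2" "q \<ge> 1"
  shows "char_poly (adj_mat (mixed_ext_P3 (int p) (- int q) (int p))) = [:1,1:]^((p - 1) + (p - 1)) * [:0,1:]^(q - 1) * ([:-(real p - 1),1:] * [:-(2*real p*real q), -(real p - 1), 1:])"
proof -
  have "char_poly (adj_mat (mixed_ext_P3 (int p) (- int q) (int p))) =
    dd (Rmix (int p) (- int q) (int p)) 0 ^ ((p) - 1) * dd (Rmix (int p) (- int q) (int p)) 1 ^ ((q) - 1) * dd (Rmix (int p) (- int q) (int p)) 2 ^ ((p) - 1) * (let W0 = of_nat (p); W1 = of_nat (q); W2 = of_nat (p);
         a = (\<lambda>k l. (if k = l then dd (Rmix (int p) (- int q) (int p)) k else 0) + gg (Rmix (int p) (- int q) (int p)) k l * (if l = 0 then W0 else if l = 1 then W1 else W2))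
     in a 0 0 * (a 1 1 * a 2 2 - a 1 2 * a 2 1) - a 0 1 * (a 1 0 * a 2 2 - a 1 2 * a 2 0)
        + a 0 2 * (a 1 0 * a 2 1 - a 1 1 * a 2 0))"
    by (rule char_blocks) (use assms in \<open>auto simp: mixed_fst mixed_adj ks_fst ks_adj kb_fst kb_adj\<close>)
  also have "\<dots> = [:1,1:] ^ ((p) - 1) * [:0,1:] ^ ((q) - 1) * [:1,1:] ^ ((p) - 1) * ([:-(real p - 1),1:] * [:-(2*real p*real q), -(real p - 1), 1:])"
  proof -
    have "(let W0 = of_nat (p); W1 = of_nat (q); W2 = of_nat (p);
         a = (\<lambda>k l. (if k = l then dd (Rmix (int p) (- int q) (int p)) k else 0) + gg (Rmix (int p) (- int q) (int p)) k l * (if l = 0 then W0 else if l = 1 then W1 else W2))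
     in a 0 0 * (a 1 1 * a 2 2 - a 1 2 * a 2 1) - a 0 1 * (a 1 0 * a 2 2 - a 1 2 * a 2 0)
        + a 0 2 * (a 1 0 * a 2 1 - a 1 1 * a 2 0)) = [:-(real p - 1),1:] * [:-(2*real p*real q), -(real p - 1), 1:]"
      apply (rule poly_eq_poly_eq_iff[THEN iffD1])
      apply (rule ext)
      using assms apply (simp add: dd_def gg_def Rmix_def Rks_def Rkb_def Let_def )
      apply (simp add: algebra_simps)
      done
    moreover have "dd (Rmix (int p) (- int q) (int p)) 0 = [:1,1:]" "dd (Rmix (int p) (- int q) (int p)) 1 = [:0,1:]" "dd (Rmix (int p) (- int q) (int p)) 2 = [:1,1:]"
      using assms by (auto simp: dd_def Rmix_def Rks_def Rkb_def)
    ultimately show ?thesis by simp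
  qed
  also have "\<dots> = [:1,1:]^((p - 1) + (p - 1)) * [:0,1:]^(q - 1) * ([:-(real p - 1),1:] * [:-(2*real p*real q), -(real p - 1), 1:])"
    by (simp only: power_add mult_ac power_0 mult_1_left mult_1_right)
  finally show ?thesis .
qed

lemma char_H1:
  assumes "p \<ge> 2" "q \<ge> 1"
  shows "char_poly (adj_mat (disj_union (K p) (complete_split p (2 * q)))) = [:1,1:]^((p - 1) + (p - 1)) * [:0,1:]^(2 * q - 1) * ([:-(real p - 1),1:] * [:-(2*real p*real q), -(real p - 1), 1:])"
proof -
  have "char_poly (adj_mat (disj_union (K p) (complete_split p (2 * q)))) =
    dd (Rks) 0 ^ ((p) - 1) * dd (Rks) 1 ^ ((p) - 1) * dd (Rks) 2 ^ ((2 * q) - 1) * (let W0 = of_nat (p); W1 = of_nat (p); W2 = of_nat (2 * q);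
         a = (\<lambda>k l. (if k = l then dd (Rks) k else 0) + gg (Rks) k l * (if l = 0 then W0 else if l = 1 then W1 else W2))
     in a 0 0 * (a 1 1 * a 2 2 - a 1 2 * a 2 1) - a 0 1 * (a 1 0 * a 2 2 - a 1 2 * a 2 0)
        + a 0 2 * (a 1 0 * a 2 1 - a 1 1 * a 2 0))"
    by (rule char_blocks) (use assms in \<open>auto simp: mixed_fst mixed_adj ks_fst ks_adj kb_fst kb_adj\<close>)
  also have "\<dots> = [:1,1:] ^ ((p) - 1) * [:1,1:] ^ ((p) - 1) * [:0,1:] ^ ((2 * q) - 1) * ([:-(real p - 1),1:] * [:-(2*real p*real q), -(real p - 1), 1:])"
  proof -
    have "(let W0 = of_nat (p); W1 = of_nat (p); W2 = of_nat (2 * q);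
         a = (\<lambda>k l. (if k = l then dd (Rks) k else 0) + gg (Rks) k l * (if l = 0 then W0 else if l = 1 then W1 else W2))
     in a 0 0 * (a 1 1 * a 2 2 - a 1 2 * a 2 1) - a 0 1 * (a 1 0 * a 2 2 - a 1 2 * a 2 0)
        + a 0 2 * (a 1 0 * a 2 1 - a 1 1 * a 2 0)) = [:-(real p - 1),1:] * [:-(2*real p*real q), -(real p - 1), 1:]"
      apply (rule poly_eq_poly_eq_iff[THEN iffD1])
      apply (rule ext)
      using assms apply (simp add: dd_def gg_def Rmix_def Rks_def Rkb_def Let_def )
      apply (simp add: algebra_simps)
      done
    moreover have "dd (Rks) 0 = [:1,1:]" "dd (Rks) 1 = [:1,1:]" "dd (Rks) 2 = [:0,1:]"
      using assms by (auto simp: dd_def Rmix_def Rks_def Rkb_def)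
    ultimately show ?thesis by simp
  qed
  also have "\<dots> = [:1,1:]^((p - 1) + (p - 1)) * [:0,1:]^(2 * q - 1) * ([:-(real p - 1),1:] * [:-(2*real p*real q), -(real p - 1), 1:])"
    by (simp only: power_add mult_ac power_0 mult_1_left mult_1_right)
  finally show ?thesis .
qed

lemma char_M2:
  assumes "p \<ge> 3" "m \<ge> 1" "real m = (real p - 1) * (real p - 2)"
  shows "char_poly (adj_mat (mixed_ext_P3 (int p) (int m) (int p))) = [:1,1:]^((p - 1) + (m - 1) + (p - 1)) * [:0,1:]^(0) * ([:-(real p - 1),1:] * [:-((real p - 1)*(real p * real p - real p - 1)), -(real p * real p - 2 * real p), 1:])"
proof -
  have "char_poly (adj_mat (mixed_ext_P3 (int p) (int m) (int p))) =
    dd (Rmix (int p) (int m) (int p)) 0 ^ ((p) - 1) * dd (Rmix (int p) (int m) (int p)) 1 ^ ((m) - 1) * dd (Rmix (int p) (int m) (int p)) 2 ^ ((p) - 1) * (let W0 = of_nat (p); W1 = of_nat (m); W2 = of_nat (p);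
         a = (\<lambda>k l. (if k = l then dd (Rmix (int p) (int m) (int p)) k else 0) + gg (Rmix (int p) (int m) (int p)) k l * (if l = 0 then W0 else if l = 1 then W1 else W2))
     in a 0 0 * (a 1 1 * a 2 2 - a 1 2 * a 2 1) - a 0 1 * (a 1 0 * a 2 2 - a 1 2 * a 2 0)
        + a 0 2 * (a 1 0 * a 2 1 - a 1 1 * a 2 0))"
    by (rule char_blocks) (use assms in \<open>auto simp: mixed_fst mixed_adj ks_fst ks_adj kb_fst kb_adj\<close>)
  also have "\<dots> = [:1,1:] ^ ((p) - 1) * [:1,1:] ^ ((m) - 1) * [:1,1:] ^ ((p) - 1) * ([:-(real p - 1),1:] * [:-((real p - 1)*(real p * real p - real p - 1)), -(real p * real p - 2 * real p), 1:])"
  proof -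
    have "(let W0 = of_nat (p); W1 = of_nat (m); W2 = of_nat (p);
         a = (\<lambda>k l. (if k = l then dd (Rmix (int p) (int m) (int p)) k else 0) + gg (Rmix (int p) (int m) (int p)) k l * (if l = 0 then W0 else if l = 1 then W1 else W2))
     in a 0 0 * (a 1 1 * a 2 2 - a 1 2 * a 2 1) - a 0 1 * (a 1 0 * a 2 2 - a 1 2 * a 2 0)
        + a 0 2 * (a 1 0 * a 2 1 - a 1 1 * a 2 0)) = [:-(real p - 1),1:] * [:-((real p - 1)*(real p * real p - real p - 1)), -(real p * real p - 2 * real p), 1:]"
      apply (rule poly_eq_poly_eq_iff[THEN iffD1])
      apply (rule ext)
      using assms apply (simp add: dd_def gg_def Rmix_def Rks_def Rkb_def Let_def )
      apply (simp add: algebra_simps)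
      done
    moreover have "dd (Rmix (int p) (int m) (int p)) 0 = [:1,1:]" "dd (Rmix (int p) (int m) (int p)) 1 = [:1,1:]" "dd (Rmix (int p) (int m) (int p)) 2 = [:1,1:]"
      using assms by (auto simp: dd_def Rmix_def Rks_def Rkb_def)
    ultimately show ?thesis by simp
  qed
  also have "\<dots> = [:1,1:]^((p - 1) + (m - 1) + (p - 1)) * [:0,1:]^(0) * ([:-(real p - 1),1:] * [:-((real p - 1)*(real p * real p - real p - 1)), -(real p * real p - 2 * real p), 1:])"
    by (simp only: power_add mult_ac power_0 mult_1_left mult_1_right)
  finally show ?thesis .
qed

lemma char_H2:
  assumes "p \<ge> 3"
  shows "char_poly (adj_mat (disj_union (K (p * (p - 1))) (complete_bip (p - 1) (p - 1)))) = [:1,1:]^(p * (p - 1) - 1) * [:0,1:]^((p - 1 - 1) + (p - 1 - 1)) * ([:-(real p - 1),1:] * [:-((real p - 1)*(real p * real p - real p - 1)), -(real p * real p - 2 * real p), 1:])"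
proof -
  have "char_poly (adj_mat (disj_union (K (p * (p - 1))) (complete_bip (p - 1) (p - 1)))) =
    dd (Rkb) 0 ^ ((p * (p - 1)) - 1) * dd (Rkb) 1 ^ ((p - 1) - 1) * dd (Rkb) 2 ^ ((p - 1) - 1) * (let W0 = of_nat (p * (p - 1)); W1 = of_nat (p - 1); W2 = of_nat (p - 1);
         a = (\<lambda>k l. (if k = l then dd (Rkb) k else 0) + gg (Rkb) k l * (if l = 0 then W0 else if l = 1 then W1 else W2))
     in a 0 0 * (a 1 1 * a 2 2 - a 1 2 * a 2 1) - a 0 1 * (a 1 0 * a 2 2 - a 1 2 * a 2 0)
        + a 0 2 * (a 1 0 * a 2 1 - a 1 1 * a 2 0))"
    by (rule char_blocks) (use assms in \<open>auto simp: mixed_fst mixed_adj ks_fst ks_adj kb_fst kb_adj\<close>)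
  also have "\<dots> = [:1,1:] ^ ((p * (p - 1)) - 1) * [:0,1:] ^ ((p - 1) - 1) * [:0,1:] ^ ((p - 1) - 1) * ([:-(real p - 1),1:] * [:-((real p - 1)*(real p * real p - real p - 1)), -(real p * real p - 2 * real p), 1:])"
  proof -
    have "(let W0 = of_nat (p * (p - 1)); W1 = of_nat (p - 1); W2 = of_nat (p - 1);
         a = (\<lambda>k l. (if k = l then dd (Rkb) k else 0) + gg (Rkb) k l * (if l = 0 then W0 else if l = 1 then W1 else W2))
     in a 0 0 * (a 1 1 * a 2 2 - a 1 2 * a 2 1) - a 0 1 * (a 1 0 * a 2 2 - a 1 2 * a 2 0)
        + a 0 2 * (a 1 0 * a 2 1 - a 1 1 * a 2 0)) = [:-(real p - 1),1:] * [:-((real p - 1)*(real p * real p - real p - 1)), -(real p * real p - 2 * real p), 1:]"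
      apply (rule poly_eq_poly_eq_iff[THEN iffD1])
      apply (rule ext)
      using assms apply (simp add: dd_def gg_def Rmix_def Rks_def Rkb_def Let_def of_nat_diff)
      apply (simp add: algebra_simps)
      done
    moreover have "dd (Rkb) 0 = [:1,1:]" "dd (Rkb) 1 = [:0,1:]" "dd (Rkb) 2 = [:0,1:]"
      using assms by (auto simp: dd_def Rmix_def Rks_def Rkb_def)
    ultimately show ?thesis by simp
  qed
  also have "\<dots> = [:1,1:]^(p * (p - 1) - 1) * [:0,1:]^((p - 1 - 1) + (p - 1 - 1)) * ([:-(real p - 1),1:] * [:-((real p - 1)*(real p * real p - real p - 1)), -(real p * real p - 2 * real p), 1:])"
    by (simp only: power_add mult_ac power_0 mult_1_left mult_1_right)
  finally show ?thesis .
qed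

lemma char_M3:
  assumes "p \<ge> 2" "q \<ge> 1"
  shows "char_poly (adj_mat (mixed_ext_P3 (int p) (int q) (int p))) = [:1,1:]^((p - 1) + (q - 1) + (p - 1)) * [:0,1:]^(0) * ([:-(real p - 1),1:] * [:-(real p * real q + real p + real q - 1), -(real p + real q - 2), 1:])"
proof -
  have "char_poly (adj_mat (mixed_ext_P3 (int p) (int q) (int p))) =
    dd (Rmix (int p) (int q) (int p)) 0 ^ ((p) - 1) * dd (Rmix (int p) (int q) (int p)) 1 ^ ((q) - 1) * dd (Rmix (int p) (int q) (int p)) 2 ^ ((p) - 1) * (let W0 = of_nat (p); W1 = of_nat (q); W2 = of_nat (p);
         a = (\<lambda>k l. (if k = l then dd (Rmix (int p) (int q) (int p)) k else 0) + gg (Rmix (int p) (int q) (int p)) k l * (if l = 0 then W0 else if l = 1 then W1 else W2))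
     in a 0 0 * (a 1 1 * a 2 2 - a 1 2 * a 2 1) - a 0 1 * (a 1 0 * a 2 2 - a 1 2 * a 2 0)
        + a 0 2 * (a 1 0 * a 2 1 - a 1 1 * a 2 0))"
    by (rule char_blocks) (use assms in \<open>auto simp: mixed_fst mixed_adj ks_fst ks_adj kb_fst kb_adj\<close>)
  also have "\<dots> = [:1,1:] ^ ((p) - 1) * [:1,1:] ^ ((q) - 1) * [:1,1:] ^ ((p) - 1) * ([:-(real p - 1),1:] * [:-(real p * real q + real p + real q - 1), -(real p + real q - 2), 1:])"
  proof -
    have "(let W0 = of_nat (p); W1 = of_nat (q); W2 = of_nat (p);
         a = (\<lambda>k l. (if k = l then dd (Rmix (int p) (int q) (int p)) k else 0) + gg (Rmix (int p) (int q) (int p)) k l * (if l = 0 then W0 else if l = 1 then W1 else W2))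
     in a 0 0 * (a 1 1 * a 2 2 - a 1 2 * a 2 1) - a 0 1 * (a 1 0 * a 2 2 - a 1 2 * a 2 0)
        + a 0 2 * (a 1 0 * a 2 1 - a 1 1 * a 2 0)) = [:-(real p - 1),1:] * [:-(real p * real q + real p + real q - 1), -(real p + real q - 2), 1:]"
      apply (rule poly_eq_poly_eq_iff[THEN iffD1])
      apply (rule ext)
      using assms apply (simp add: dd_def gg_def Rmix_def Rks_def Rkb_def Let_def )
      apply (simp add: algebra_simps)
      done
    moreover have "dd (Rmix (int p) (int q) (int p)) 0 = [:1,1:]" "dd (Rmix (int p) (int q) (int p)) 1 = [:1,1:]" "dd (Rmix (int p) (int q) (int p)) 2 = [:1,1:]"
      using assms by (auto simp: dd_def Rmix_def Rks_def Rkb_def)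
    ultimately show ?thesis by simp
  qed
  also have "\<dots> = [:1,1:]^((p - 1) + (q - 1) + (p - 1)) * [:0,1:]^(0) * ([:-(real p - 1),1:] * [:-(real p * real q + real p + real q - 1), -(real p + real q - 2), 1:])"
    by (simp only: power_add mult_ac power_0 mult_1_left mult_1_right)
  finally show ?thesis .
qed

lemma char_H3:
  assumes "p \<ge> 2" "q \<ge> 1" "r \<ge> 1" "real r * (real p + real q - 1) = real p + real q - 1 + real p * real q"
  shows "char_poly (adj_mat (disj_union (K p) (complete_split (p + q - 1) r))) = [:1,1:]^((p - 1) + (p + q - 1 - 1)) * [:0,1:]^(r - 1) * ([:-(real p - 1),1:] * [:-(real p * real q + real p + real q - 1), -(real p + real q - 2), 1:])"
proof -
  have "char_poly (adj_mat (disj_union (K p) (complete_split (p + q - 1) r))) =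
    dd (Rks) 0 ^ ((p) - 1) * dd (Rks) 1 ^ ((p + q - 1) - 1) * dd (Rks) 2 ^ ((r) - 1) * (let W0 = of_nat (p); W1 = of_nat (p + q - 1); W2 = of_nat (r);
         a = (\<lambda>k l. (if k = l then dd (Rks) k else 0) + gg (Rks) k l * (if l = 0 then W0 else if l = 1 then W1 else W2))
     in a 0 0 * (a 1 1 * a 2 2 - a 1 2 * a 2 1) - a 0 1 * (a 1 0 * a 2 2 - a 1 2 * a 2 0)
        + a 0 2 * (a 1 0 * a 2 1 - a 1 1 * a 2 0))"
    by (rule char_blocks) (use assms in \<open>auto simp: mixed_fst mixed_adj ks_fst ks_adj kb_fst kb_adj\<close>)
  also have "\<dots> = [:1,1:] ^ ((p) - 1) * [:1,1:] ^ ((p + q - 1) - 1) * [:0,1:] ^ ((r) - 1) * ([:-(real p - 1),1:] * [:-(real p * real q + real p + real q - 1), -(real p + real q - 2), 1:])"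
  proof -
    have "(let W0 = of_nat (p); W1 = of_nat (p + q - 1); W2 = of_nat (r);
         a = (\<lambda>k l. (if k = l then dd (Rks) k else 0) + gg (Rks) k l * (if l = 0 then W0 else if l = 1 then W1 else W2))
     in a 0 0 * (a 1 1 * a 2 2 - a 1 2 * a 2 1) - a 0 1 * (a 1 0 * a 2 2 - a 1 2 * a 2 0)
        + a 0 2 * (a 1 0 * a 2 1 - a 1 1 * a 2 0)) = [:-(real p - 1),1:] * [:-(real p * real q + real p + real q - 1), -(real p + real q - 2), 1:]"
      apply (rule poly_eq_poly_eq_iff[THEN iffD1])
      apply (rule ext)
      using assms apply (simp add: dd_def gg_def Rmix_def Rks_def Rkb_def Let_def of_nat_diff)
      apply (simp add: algebra_simps)
      done
    moreover have "dd (Rks) 0 = [:1,1:]" "dd (Rks) 1 = [:1,1:]" "dd (Rks) 2 = [:0,1:]"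
      using assms by (auto simp: dd_def Rmix_def Rks_def Rkb_def)
    ultimately show ?thesis by simp
  qed
  also have "\<dots> = [:1,1:]^((p - 1) + (p + q - 1 - 1)) * [:0,1:]^(r - 1) * ([:-(real p - 1),1:] * [:-(real p * real q + real p + real q - 1), -(real p + real q - 2), 1:])"
    by (simp only: power_add mult_ac power_0 mult_1_left mult_1_right)
  finally show ?thesis .
qed




lemma simple_from:
  assumes "\<And>i j. snd G i j = (i \<noteq> j \<and> R (\<beta> i) (\<beta> j))" "\<And>k l. R k l = R l k"
  shows "simple_graph G"
  unfolding simple_graph_def using assms by metis

lemma noiso:
  assumes n: "fst G = n1 + n2 + n3" and pos: "n1 \<ge> 1" "n2 \<ge> 1" "n3 \<ge> 1"
    and adj: "\<And>i j. snd G i j = (i \<noteq> j \<and> R (blk n1 n2 i) (blk n1 n2 j))"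
    and h0: "R 0 1 \<or> R 0 2 \<or> (R 0 0 \<and> n1 \<ge> 2)"
    and h1: "R 1 0 \<or> R 1 2 \<or> (R 1 1 \<and> n2 \<ge> 2)"
    and h2: "R 2 0 \<or> R 2 1 \<or> (R 2 2 \<and> n3 \<ge> 2)"
  shows "no_isolated G"
  unfolding no_isolated_def
proof (intro allI impI)
  fix i assume i: "i < fst G"
  have suff: "\<exists>j<fst G. snd G i j" if "j < fst G" "j \<noteq> i" "R (blk n1 n2 i) (blk n1 n2 j)" for j
    using that adj by blast
  consider (a) "i < n1" | (b) "n1 \<le> i" "i < n1 + n2" | (c) "n1 + n2 \<le> i" by linarith
  then show "\<exists>j<fst G. snd G i j"
  proof cases
    case a
    hence bi: "blk n1 n2 i = 0" by (simp add: blk_def)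
    from h0 show ?thesis
    proof (elim disjE conjE)
      assume "R 0 1" thus ?thesis using suff[of n1] bi a pos n by (simp add: blk_def)
    next
      assume "R 0 2" thus ?thesis using suff[of "n1+n2"] bi a pos n by (simp add: blk_def)
    next
      assume "R 0 0" "n1 \<ge> 2" thus ?thesis using suff[of "if i = 0 then 1 else 0"] bi a pos n by (auto simp: blk_def)
    qed
  next
    case b
    hence bi: "blk n1 n2 i = 1" by (simp add: blk_def)
    from h1 show ?thesis
    proof (elim disjE conjE)
      assume "R 1 0" thus ?thesis using suff[of 0] bi b pos n by (simp add: blk_def)
    next
      assume "R 1 2" thus ?thesis using suff[of "n1+n2"] bi b pos n by (simp add: blk_def)
    next
      assume "R 1 1" "n2 \<ge> 2" thus ?thesis using suff[of "if i = n1 then n1 + 1 else n1"] bi b pos n by (auto simp: blk_def)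
    qed
  next
    case c
    hence bi: "blk n1 n2 i = 2" by (simp add: blk_def)
    from h2 show ?thesis
    proof (elim disjE conjE)
      assume "R 2 0" thus ?thesis using suff[of 0] bi c pos n by (simp add: blk_def)
    next
      assume "R 2 1" thus ?thesis using suff[of "n1"] bi c pos n by (simp add: blk_def)
    next
      assume "R 2 2" "n3 \<ge> 2" thus ?thesis using suff[of "if i = n1 + n2 then n1 + n2 + 1 else n1 + n2"] bi c i pos n by (auto simp: blk_def)
    qed
  qed
qed

lemma not_iso: "fst G \<noteq> fst H \<Longrightarrow> \<not> isomorphic G H"
  unfolding isomorphic_def using bij_betw_same_card by fastforce

lemma Rmix_sym: "Rmix a b c k l = Rmix a b c l k" unfolding Rmix_def by auto
lemma Rks_sym: "Rks k l = Rks l k" unfolding Rks_def by auto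
lemma Rkb_sym: "Rkb k l = Rkb l k" unfolding Rkb_def by auto




lemma part1:
  assumes p: "p \<ge> 2" and q: "q \<ge> 1"
  shows "pseudo_cospectral (mixed_ext_P3 (int p) (- int q) (int p)) (disj_union (K p) (complete_split p (2 * q)))
     \<and> \<not> isomorphic (mixed_ext_P3 (int p) (- int q) (int p)) (disj_union (K p) (complete_split p (2 * q)))"
proof -
  let ?M = "mixed_ext_P3 (int p) (- int q) (int p)"
  let ?H = "disj_union (K p) (complete_split p (2 * q))"
  have "2 * real p * real q > 0" using p q by simp
  moreover have "2 * real p * real q > (real p - 1) + 1"
  proof -
    have "real p * (2 * real q) \<ge> real p * 2" using q p by (intro mult_left_mono) auto
    thus ?thesis using p by simp
  qed
  ultimately obtain r1 r2 where qr: "[:-(2 * real p * real q), -(real p - 1), 1:] = [:-r1,1:] * [:-r2,1:]"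
    and r1: "r1 > 0" and r2: "r2 < -1"
    using quad_roots by blast
  have l: "real p - 1 > 0" using p by simp
  have adjM: "\<And>i j. snd ?M i j = (i \<noteq> j \<and> Rmix (int p) (- int q) (int p) (blk p q i) (blk p q j))"
    by (simp add: mixed_adj)
  have adjH: "\<And>i j. snd ?H i j = (i \<noteq> j \<and> Rks (blk p p i) (blk p p j))"
    by (simp add: ks_adj)
  have sM: "simple_graph ?M" by (rule simple_from[where R="Rmix (int p) (- int q) (int p)" and \<beta>="blk p q", OF adjM Rmix_sym])
  have sH: "simple_graph ?H" by (rule simple_from[where R="Rks" and \<beta>="blk p p", OF adjH Rks_sym])
  have nM: "no_isolated ?M"
    by (rule noiso[of _ p q p, OF _ _ _ _ adjM]) (use p q in \<open>auto simp: mixed_fst Rmix_def\<close>)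
  have nH: "no_isolated ?H"
    by (rule noiso[of _ p p "2*q", OF _ _ _ _ adjH]) (use p q in \<open>auto simp: ks_fst Rks_def\<close>)
  have A: "classG2 ?M \<and> filter_mset (\<lambda>x. x \<noteq> 0) (spec ?M) = replicate_mset ((p - 1) + (p - 1)) (-1) + {#real p - 1, r1, r2#}"
    by (rule spec_form[OF sM nM _ l r1 r2]) (unfold char_M1[OF p q] qr, rule refl)
  have B: "classG2 ?H \<and> filter_mset (\<lambda>x. x \<noteq> 0) (spec ?H) = replicate_mset ((p - 1) + (p - 1)) (-1) + {#real p - 1, r1, r2#}"
    by (rule spec_form[OF sH nH _ l r1 r2]) (unfold char_H1[OF p q] qr, rule refl)
  have "pseudo_cospectral ?M ?H" unfolding pseudo_cospectral_def using A B by simp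
  moreover have "fst ?M \<noteq> fst ?H" using q by (simp add: mixed_fst ks_fst)
  ultimately show ?thesis using not_iso by blast
qed

lemma part2:
  assumes p: "p \<ge> 3"
  shows "pseudo_cospectral (mixed_ext_P3 (int p) (int ((p - 1) * (p - 2))) (int p)) (disj_union (K (p * (p - 1))) (complete_bip (p - 1) (p - 1)))
     \<and> \<not> isomorphic (mixed_ext_P3 (int p) (int ((p - 1) * (p - 2))) (int p)) (disj_union (K (p * (p - 1))) (complete_bip (p - 1) (p - 1)))"
proof -
  define m where "m = (p - 1) * (p - 2)"
  obtain k where k: "p = k + 3" using p by (metis add.commute le_Suc_ex)
  have m1: "m \<ge> 1" unfolding m_def k by simp
  have mr: "real m = (real p - 1) * (real p - 2)" unfolding m_def using p by (simp add: of_nat_diff)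
  let ?M = "mixed_ext_P3 (int p) (int m) (int p)"
  let ?H = "disj_union (K (p * (p - 1))) (complete_bip (p - 1) (p - 1))"
  have "(real p - 1) * (real p * real p - real p - 1) > 0"
  proof (intro mult_pos_pos)
    show "real p - 1 > 0" using p by simp
    have "real p * real p \<ge> 3 * real p" using p by (intro mult_right_mono) auto
    moreover have "real p \<ge> 3" using p by simp
    ultimately show "real p * real p - real p - 1 > 0" by linarith
  qed
  moreover have "(real p - 1) * (real p * real p - real p - 1) > (real p * real p - 2 * real p) + 1"
  proof -
    have "(real p - 1) * real p * (real p - 2) > 0" using p by (intro mult_pos_pos) auto
    thus ?thesis by (simp add: algebra_simps)
  qed
  ultimately obtain r1 r2 where qr: "[:-((real p - 1) * (real p * real p - real p - 1)), -(real p * real p - 2 * real p), 1:] = [:-r1,1:] * [:-r2,1:]"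
    and r1: "r1 > 0" and r2: "r2 < -1"
    using quad_roots by blast
  have l: "real p - 1 > 0" using p by simp
  have adjM: "\<And>i j. snd ?M i j = (i \<noteq> j \<and> Rmix (int p) (int m) (int p) (blk p m i) (blk p m j))"
    by (simp add: mixed_adj)
  have adjH: "\<And>i j. snd ?H i j = (i \<noteq> j \<and> Rkb (blk (p * (p - 1)) (p - 1) i) (blk (p * (p - 1)) (p - 1) j))"
    by (simp add: kb_adj)
  have sM: "simple_graph ?M" by (rule simple_from[where R="Rmix (int p) (int m) (int p)" and \<beta>="blk p m", OF adjM Rmix_sym])
  have sH: "simple_graph ?H" by (rule simple_from[where R="Rkb" and \<beta>="blk (p * (p - 1)) (p - 1)", OF adjH Rkb_sym])
  have nM: "no_isolated ?M"
    by (rule noiso[of _ p m p, OF _ _ _ _ adjM]) (use p m1 in \<open>auto simp: mixed_fst Rmix_def\<close>)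
  have nH: "no_isolated ?H"
    by (rule noiso[of _ "p * (p - 1)" "p - 1" "p - 1", OF _ _ _ _ adjH]) (use p in \<open>auto simp: kb_fst Rkb_def k\<close>)
  have ae: "(p - 1) + (m - 1) + (p - 1) = p * (p - 1) - 1" unfolding m_def k by (simp add: algebra_simps)
  have A: "classG2 ?M \<and> filter_mset (\<lambda>x. x \<noteq> 0) (spec ?M) = replicate_mset ((p - 1) + (m - 1) + (p - 1)) (-1) + {#real p - 1, r1, r2#}"
    by (rule spec_form[OF sM nM _ l r1 r2]) (unfold char_M2[OF p m1 mr] qr, rule refl)
  have B: "classG2 ?H \<and> filter_mset (\<lambda>x. x \<noteq> 0) (spec ?H) = replicate_mset (p * (p - 1) - 1) (-1) + {#real p - 1, r1, r2#}"
    by (rule spec_form[OF sH nH _ l r1 r2]) (unfold char_H2[OF p] qr, rule refl)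
  have "pseudo_cospectral ?M ?H" unfolding pseudo_cospectral_def using A[unfolded ae] B by simp
  moreover have "fst ?M \<noteq> fst ?H"
  proof -
    have "fst ?M = p + m + p" by (simp add: mixed_fst)
    moreover have "fst ?H = p * (p - 1) + (p - 1) + (p - 1)" by (simp add: kb_fst)
    moreover have "p + m + p \<noteq> p * (p - 1) + (p - 1) + (p - 1)" unfolding m_def k by (simp add: algebra_simps)
    ultimately show ?thesis by simp
  qed
  ultimately show ?thesis using not_iso unfolding m_def by blast
qed

lemma part3:
  assumes p: "p \<ge> 2" and q: "q \<ge> 1" and r: "real r = 1 + real (p * q) / real (p + q - 1)"
  shows "pseudo_cospectral (mixed_ext_P3 (int p) (int q) (int p)) (disj_union (K p) (complete_split (p + q - 1) r))
     \<and> \<not> isomorphic (mixed_ext_P3 (int p) (int q) (int p)) (disj_union (K p) (complete_split (p + q - 1) r))"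
proof -
  let ?M = "mixed_ext_P3 (int p) (int q) (int p)"
  let ?H = "disj_union (K p) (complete_split (p + q - 1) r)"
  have den: "real (p + q - 1) = real p + real q - 1" using p by (simp add: of_nat_diff)
  have denpos: "real p + real q - 1 > 0" using p q by simp
  have rr: "real r * (real p + real q - 1) = real p + real q - 1 + real p * real q"
    using r denpos unfolding den by (simp add: field_simps)
  have "real r > 1" using r p q unfolding den by (simp add: denpos)
  hence r2': "r \<ge> 2" by simp
  hence r1': "r \<ge> 1" by simp
  have "real p * real q + real p + real q - 1 > 0"
  proof -
    have "real p * real q \<ge> 0" by simp
    thus ?thesis using denpos by linarith
  qed
  moreover have "real p * real q + real p + real q - 1 > (real p + real q - 2) + 1"
    using p q by simp
  ultimately obtain r1 r2 where qr: "[:-(real p * real q + real p + real q - 1), -(real p + real q - 2), 1:] = [:-r1,1:] * [:-r2,1:]"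
    and r1: "r1 > 0" and r2: "r2 < -1"
    using quad_roots by blast
  have l: "real p - 1 > 0" using p by simp
  have adjM: "\<And>i j. snd ?M i j = (i \<noteq> j \<and> Rmix (int p) (int q) (int p) (blk p q i) (blk p q j))"
    by (simp add: mixed_adj)
  have adjH: "\<And>i j. snd ?H i j = (i \<noteq> j \<and> Rks (blk p (p + q - 1) i) (blk p (p + q - 1) j))"
    by (simp add: ks_adj)
  have sM: "simple_graph ?M" by (rule simple_from[where R="Rmix (int p) (int q) (int p)" and \<beta>="blk p q", OF adjM Rmix_sym])
  have sH: "simple_graph ?H" by (rule simple_from[where R="Rks" and \<beta>="blk p (p + q - 1)", OF adjH Rks_sym])
  have nM: "no_isolated ?M"
    by (rule noiso[of _ p q p, OF _ _ _ _ adjM]) (use p q in \<open>auto simp: mixed_fst Rmix_def\<close>)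
  have nH: "no_isolated ?H"
    by (rule noiso[of _ p "p + q - 1" r, OF _ _ _ _ adjH]) (use p q r1' in \<open>auto simp: ks_fst Rks_def\<close>)
  have ae: "(p - 1) + (q - 1) + (p - 1) = (p - 1) + (p + q - 1 - 1)" using p q by simp
  have A: "classG2 ?M \<and> filter_mset (\<lambda>x. x \<noteq> 0) (spec ?M) = replicate_mset ((p - 1) + (q - 1) + (p - 1)) (-1) + {#real p - 1, r1, r2#}"
    by (rule spec_form[OF sM nM _ l r1 r2]) (unfold char_M3[OF p q] qr, rule refl)
  have B: "classG2 ?H \<and> filter_mset (\<lambda>x. x \<noteq> 0) (spec ?H) = replicate_mset ((p - 1) + (p + q - 1 - 1)) (-1) + {#real p - 1, r1, r2#}"
    by (rule spec_form[OF sH nH _ l r1 r2]) (unfold char_H3[OF p q r1' rr] qr, rule refl)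
  have "pseudo_cospectral ?M ?H" unfolding pseudo_cospectral_def using A[unfolded ae] B by simp
  moreover have "fst ?M \<noteq> fst ?H" using p q r2' by (simp add: mixed_fst ks_fst)
  ultimately show ?thesis using not_iso by blast
qed

theorem proposition2:
  shows "(\<forall>p q :: nat. p \<ge> 2 \<longrightarrow> q \<ge> 1 \<longrightarrow>
            (let M = mixed_ext_P3 (int p) (- int q) (int p);
                 H = disj_union (K p) (complete_split p (2 * q))
             in pseudo_cospectral M H \<and> \<not> isomorphic M H))
    \<and> (\<forall>p :: nat. p \<ge> 3 \<longrightarrow>
            (let M = mixed_ext_P3 (int p) (int ((p - 1) * (p - 2))) (int p);
                 H = disj_union (K (p * (p - 1))) (complete_bip (p - 1) (p - 1))
             in pseudo_cospectral M H \<and> \<not> isomorphic M H))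
    \<and> (\<forall>p q r :: nat. p \<ge> 2 \<longrightarrow> q \<ge> 1 \<longrightarrow>
            real r = 1 + real (p * q) / real (p + q - 1) \<longrightarrow>
            (let M = mixed_ext_P3 (int p) (int q) (int p);
                 H = disj_union (K p) (complete_split (p + q - 1) r)
             in pseudo_cospectral M H \<and> \<not> isomorphic M H))"
  unfolding Let_def using part1 part2 part3 by blast


end
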